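(* For every graph $G$, the graph $KB_m(G)$ contains no induced subgraph isomorphic to a $\mathrm{net}^*$ graph.
   Context: All graphs are finite and simple. A biclique of a graph $G$ is a set $P\subseteq V(G)$ such that the induced subgraph $G[P]$ is a complete bipartite graph with both parts nonempty, and $P$ is inclusion-maximal with this property. Since $G[P]$ is connected, its bipartition into two nonempty independent sets $X,Y$ (every vertex of $X$ adjacent to every vertex of $Y$) is unique; we write $P=XY$ to mean $P=X\cup Y$ with $X,Y$ these two parts, called the sides of $P$. Two bicliques $P,Q$ of $G$ are mutually included if their sides can be named $P=X_PY_P$, $Q=X_QY_Q$ so that $X_Q\subsetneq X_P$ and $Y_P\subsetneq Y_Q$. The mutually included biclique graph $KB_m(G)$ has the set of bicliques of $G$ as vertex set, two distinct bicliques being adjacent iff they are mutually included. The net is the graph on six vertices $x_1,x_2,x_3,s_1,s_2,s_3$ whose edges are $x_1x_2,x_2x_3,x_1x_3,x_1s_1,x_2s_2,x_3s_3$. A $\mathrm{net}^*$ graph is any graph obtained from the net by adding zero or more edges, each joining two vertices of $\{s_1,s_2,s_3\}$. *)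

theory Defs
  imports Main
begin

text \<open>A (finite simple) graph is given by a vertex set V and an adjacency relation E;
  all notions below only look at E restricted to V.\<close>

definition simple_graph :: "'a set \<Rightarrow> ('a \<Rightarrow> 'a \<Rightarrow> bool) \<Rightarrow> bool" where
  "simple_graph V E \<longleftrightarrow> finite V \<and> (\<forall>x y. E x y \<longrightarrow> E y x) \<and> (\<forall>x. \<not> E x x)"

definition sides :: "('a \<Rightarrow> 'a \<Rightarrow> bool) \<Rightarrow> 'a set \<Rightarrow> 'a set \<Rightarrow> 'a set \<Rightarrow> bool" where
  "sides E P X Y \<longleftrightarrow> X \<noteq> {} \<and> Y \<noteq> {} \<and> X \<inter> Y = {} \<and> P = X \<union> Y
     \<and> (\<forall>x\<in>X. \<forall>x'\<in>X. \<not> E x x') \<and> (\<forall>y\<in>Y. \<forall>y'\<in>Y. \<not> E y y')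
     \<and> (\<forall>x\<in>X. \<forall>y\<in>Y. E x y)"

definition complete_bipartite_set :: "('a \<Rightarrow> 'a \<Rightarrow> bool) \<Rightarrow> 'a set \<Rightarrow> bool" where
  "complete_bipartite_set E P \<longleftrightarrow> (\<exists>X Y. sides E P X Y)"

definition biclique :: "'a set \<Rightarrow> ('a \<Rightarrow> 'a \<Rightarrow> bool) \<Rightarrow> 'a set \<Rightarrow> bool" where
  "biclique V E P \<longleftrightarrow> P \<subseteq> V \<and> complete_bipartite_set E P
     \<and> (\<forall>Q. P \<subset> Q \<and> Q \<subseteq> V \<longrightarrow> \<not> complete_bipartite_set E Q)"

definition mutually_included :: "('a \<Rightarrow> 'a \<Rightarrow> bool) \<Rightarrow> 'a set \<Rightarrow> 'a set \<Rightarrow> bool" where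
  "mutually_included E P Q \<longleftrightarrow> (\<exists>XP YP XQ YQ. sides E P XP YP \<and> sides E Q XQ YQ
     \<and> XQ \<subset> XP \<and> YP \<subset> YQ)"

definition KBm_V :: "'a set \<Rightarrow> ('a \<Rightarrow> 'a \<Rightarrow> bool) \<Rightarrow> 'a set set" where
  "KBm_V V E = {P. biclique V E P}"

definition KBm_E :: "'a set \<Rightarrow> ('a \<Rightarrow> 'a \<Rightarrow> bool) \<Rightarrow> 'a set \<Rightarrow> 'a set \<Rightarrow> bool" where
  "KBm_E V E P Q \<longleftrightarrow> biclique V E P \<and> biclique V E Q \<and> P \<noteq> Q
     \<and> (mutually_included E P Q \<or> mutually_included E Q P)"

text \<open>The net on vertices 0..5 with x1=0, x2=1, x3=2, s1=3, s2=4, s3=5.\<close>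
definition net_V :: "nat set" where
  "net_V = {0..<6}"

definition net_E :: "nat \<Rightarrow> nat \<Rightarrow> bool" where
  "net_E a b \<longleftrightarrow> {a, b} \<in> {{0,1}, {1,2}, {0,2}, {0,3}, {1,4}, {2,5}}"

definition net_star_E :: "nat set set \<Rightarrow> nat \<Rightarrow> nat \<Rightarrow> bool" where
  "net_star_E S a b \<longleftrightarrow> net_E a b \<or> {a, b} \<in> S"

definition net_star_extra :: "nat set set \<Rightarrow> bool" where
  "net_star_extra S \<longleftrightarrow> S \<subseteq> {{3,4}, {3,5}, {4,5}}"

definition has_induced_copy ::
  "'a set \<Rightarrow> ('a \<Rightarrow> 'a \<Rightarrow> bool) \<Rightarrow> 'b set \<Rightarrow> ('b \<Rightarrow> 'b \<Rightarrow> bool) \<Rightarrow> bool" where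
  "has_induced_copy V E W F \<longleftrightarrow> (\<exists>f. inj_on f W \<and> f ` W \<subseteq> V
     \<and> (\<forall>a\<in>W. \<forall>b\<in>W. E (f a) (f b) \<longleftrightarrow> F a b))"

end

theory Submission
  imports Defs
begin

definition lt :: "'a set \<times> 'a set \<Rightarrow> 'a set \<times> 'a set \<Rightarrow> bool" where
  "lt p q \<longleftrightarrow> fst q \<subset> fst p \<and> snd p \<subset> snd q"

definition sw :: "'a set \<times> 'a set \<Rightarrow> 'a set \<times> 'a set" where
  "sw p = (snd p, fst p)"

definition adj :: "'a set \<times> 'a set \<Rightarrow> 'a set \<times> 'a set \<Rightarrow> bool" where
  "adj p q \<longleftrightarrow> lt p q \<or> lt q p \<or> lt p (sw q) \<or> lt (sw q) p"

definition sp :: "('a \<Rightarrow> 'a \<Rightarrow> bool) \<Rightarrow> 'a set \<Rightarrow> 'a set \<times> 'a set \<Rightarrow> bool" where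
  "sp E P p \<longleftrightarrow> sides E P (fst p) (snd p)"

lemma lt_trans: "lt p q \<Longrightarrow> lt q r \<Longrightarrow> lt p r"
  unfolding lt_def by blast

lemma sw_sw[simp]: "sw (sw p) = p" by (simp add: sw_def)

lemma lt_sw: "lt (sw p) (sw q) = lt q p"
  unfolding lt_def sw_def by auto

lemma lt_swa: "lt (sw p) q = lt (sw q) p"
  unfolding lt_def sw_def by auto

lemma lt_swb: "lt q (sw p) = lt p (sw q)"
  unfolding lt_def sw_def by auto

lemma adj_sw1: "adj (sw p) q = adj p q"
  unfolding adj_def by (metis lt_sw lt_swa lt_swb)

lemma adj_sw2: "adj p (sw q) = adj p q"
  unfolding adj_def by (metis lt_sw lt_swa lt_swb sw_sw)

lemma sp_sw: "\<forall>x y. E x y \<longrightarrow> E y x \<Longrightarrow> sp E P p \<Longrightarrow> sp E P (sw p)"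
  unfolding sp_def sides_def sw_def by auto

lemma sides_unique:
  assumes "sides E P A B" "sides E P C D"
  shows "(C = A \<and> D = B) \<or> (C = B \<and> D = A)"
proof -
  have A: "A \<noteq> {}" "B \<noteq> {}" "A \<inter> B = {}" "P = A \<union> B"
    "\<And>x x'. x \<in> A \<Longrightarrow> x' \<in> A \<Longrightarrow> \<not> E x x'"
    "\<And>x x'. x \<in> B \<Longrightarrow> x' \<in> B \<Longrightarrow> \<not> E x x'"
    "\<And>x y. x \<in> A \<Longrightarrow> y \<in> B \<Longrightarrow> E x y"
    using assms(1) unfolding sides_def by auto
  have C: "C \<noteq> {}" "D \<noteq> {}" "C \<inter> D = {}" "P = C \<union> D"
    "\<And>x x'. x \<in> C \<Longrightarrow> x' \<in> C \<Longrightarrow> \<not> E x x'"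
    "\<And>x x'. x \<in> D \<Longrightarrow> x' \<in> D \<Longrightarrow> \<not> E x x'"
    "\<And>x y. x \<in> C \<Longrightarrow> y \<in> D \<Longrightarrow> E x y"
    using assms(2) unfolding sides_def by auto
  from A(1) obtain a where a: "a \<in> A" by blast
  from A(2) obtain b where b: "b \<in> B" by blast
  have "a \<in> C \<or> a \<in> D" using a A(4) C(4) by blast
  then show ?thesis
  proof
    assume aC: "a \<in> C"
    have BD: "B \<subseteq> D"
    proof
      fix y assume "y \<in> B"
      then have "E a y" using A(7) a by blast
      moreover have "y \<in> C \<or> y \<in> D" using \<open>y \<in> B\<close> A(4) C(4) by blast
      ultimately show "y \<in> D" using C(5) aC by blast
    qed
    have AC: "A \<subseteq> C"
    proof
      fix x assume "x \<in> A"
      then have "E x b" using A(7) b by blast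
      moreover have "x \<in> C \<or> x \<in> D" using \<open>x \<in> A\<close> A(4) C(4) by blast
      ultimately show "x \<in> C" using C(6) BD b by blast
    qed
    have "C \<subseteq> A" using AC BD A(4) C(3,4) by blast
    moreover have "D \<subseteq> B" using AC BD A(3,4) C(3,4) by blast
    ultimately show ?thesis using AC BD by blast
  next
    assume aD: "a \<in> D"
    have BC: "B \<subseteq> C"
    proof
      fix y assume "y \<in> B"
      then have "E a y" using A(7) a by blast
      moreover have "y \<in> C \<or> y \<in> D" using \<open>y \<in> B\<close> A(4) C(4) by blast
      ultimately show "y \<in> C" using C(6) aD by blast
    qed
    have AD: "A \<subseteq> D"
    proof
      fix x assume "x \<in> A"
      then have "E x b" using A(7) b by blast
      moreover have "x \<in> C \<or> x \<in> D" using \<open>x \<in> A\<close> A(4) C(4) by blast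
      ultimately show "x \<in> D" using C(5) BC b by blast
    qed
    have "D \<subseteq> A" using AD BC A(4) C(3,4) by blast
    moreover have "C \<subseteq> B" using AD BC A(3,4) C(3,4) by blast
    ultimately show ?thesis using AD BC by blast
  qed
qed

lemma sp_unique: "sp E P p \<Longrightarrow> sp E P q \<Longrightarrow> q = p \<or> q = sw p"
  unfolding sp_def sw_def using sides_unique
  by (metis prod.collapse)

lemma adj_of_sp:
  assumes "sp E P p" "sp E Q q" "sp E P p'" "sp E Q q'" "adj p' q'"
  shows "adj p q"
  using sp_unique[OF assms(1,3)] sp_unique[OF assms(2,4)] assms(5)
  by (auto simp: adj_sw1 adj_sw2)

lemma mi_adj:
  assumes "mutually_included E P Q" "sp E P p" "sp E Q q"
  shows "adj p q"
proof -
  from assms(1) obtain XP YP XQ YQ where h: "sides E P XP YP" "sides E Q XQ YQ"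
    "XQ \<subset> XP" "YP \<subset> YQ" unfolding mutually_included_def by blast
  have "adj (XP, YP) (XQ, YQ)" using h unfolding adj_def lt_def by auto
  then show ?thesis using adj_of_sp[OF assms(2,3), of "(XP,YP)" "(XQ,YQ)"] h
    by (simp add: sp_def)
qed

lemma KBm_E_adj:
  assumes sym: "\<forall>x y. E x y \<longrightarrow> E y x"
    and "biclique V E P" "biclique V E Q" "sp E P p" "sp E Q q"
  shows "KBm_E V E P Q \<longleftrightarrow> P \<noteq> Q \<and> adj p q"
proof
  assume "KBm_E V E P Q"
  then have "P \<noteq> Q" "mutually_included E P Q \<or> mutually_included E Q P"
    unfolding KBm_E_def by auto
  moreover have "adj q p \<longleftrightarrow> adj p q" unfolding adj_def by (metis lt_sw lt_swa lt_swb sw_sw)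
  ultimately show "P \<noteq> Q \<and> adj p q" using mi_adj[OF _ assms(4,5)] mi_adj[OF _ assms(5,4)] by blast
next
  assume h: "P \<noteq> Q \<and> adj p q"
  have sp2: "sp E Q (sw q)" using sp_sw[OF sym assms(5)] .
  obtain A B where p: "p = (A,B)" by (cases p)
  obtain C D where q: "q = (C,D)" by (cases q)
  have sP: "sides E P A B" using assms(4) p by (simp add: sp_def)
  have sQ: "sides E Q C D" using assms(5) q by (simp add: sp_def)
  have sQ': "sides E Q D C" using sp2 q by (simp add: sp_def sw_def)
  have "(C \<subset> A \<and> B \<subset> D) \<or> (A \<subset> C \<and> D \<subset> B) \<or> (D \<subset> A \<and> B \<subset> C) \<or> (A \<subset> D \<and> C \<subset> B)"
    using h unfolding adj_def lt_def sw_def p q by simp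
  then have "mutually_included E P Q \<or> mutually_included E Q P"
  proof (elim disjE)
    assume "C \<subset> A \<and> B \<subset> D" then show ?thesis
      unfolding mutually_included_def using sP sQ by blast
  next
    assume "A \<subset> C \<and> D \<subset> B" then show ?thesis
      unfolding mutually_included_def using sP sQ by blast
  next
    assume "D \<subset> A \<and> B \<subset> C" then show ?thesis
      unfolding mutually_included_def using sP sQ' by blast
  next
    assume "A \<subset> D \<and> C \<subset> B" then show ?thesis
      unfolding mutually_included_def using sP sQ' by blast
  qed
  then show "KBm_E V E P Q" using h assms unfolding KBm_E_def by auto
qed

lemma nomix:
  assumes "sp E P a" "sp E Q b" "sp E R c" "lt a b" "lt a c"
    "lt c (sw b) \<or> lt (sw b) c"
  shows False
proof -
  obtain A B where a: "a = (A,B)" by (cases a)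
  obtain C D where b: "b = (C,D)" by (cases b)
  obtain F G where c: "c = (F,G)" by (cases c)
  have sA: "sides E P A B" "sides E Q C D" "sides E R F G" using assms a b c by (auto simp: sp_def)
  have o: "C \<subset> A" "B \<subset> D" "F \<subset> A" "B \<subset> G" using assms(4,5) a b c by (auto simp: lt_def)
  from assms(6) have dj: "(D \<subset> F \<and> G \<subset> C) \<or> (F \<subset> D \<and> C \<subset> G)"
    using b c by (auto simp: lt_def sw_def)
  have AB: "A \<inter> B = {}" "B \<noteq> {}" "C \<noteq> {}"
    "\<And>x y. x \<in> A \<Longrightarrow> y \<in> B \<Longrightarrow> E x y"
    "\<And>x x'. x \<in> G \<Longrightarrow> x' \<in> G \<Longrightarrow> \<not> E x x'"
    using sA unfolding sides_def by auto
  from dj show False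
  proof
    assume "D \<subset> F \<and> G \<subset> C"
    then have "B \<subseteq> A" using o by blast
    then show False using AB by blast
  next
    assume h: "F \<subset> D \<and> C \<subset> G"
    from AB obtain cc where cc: "cc \<in> C" by blast
    from AB obtain bb where bb: "bb \<in> B" by blast
    have "E cc bb" using cc bb o AB(4) by blast
    moreover have "cc \<in> G" "bb \<in> G" using h o cc bb by auto
    ultimately show False using AB(5) by blast
  qed
qed

lemma nomix2:
  assumes "sp E P a" "sp E Q b" "sp E R c" "lt b a" "lt c a"
    "lt c (sw b) \<or> lt (sw b) c" and sym: "\<forall>x y. E x y \<longrightarrow> E y x"
  shows False
proof -
  have "lt (sw a) (sw b)" "lt (sw a) (sw c)" using assms(4,5) by (auto simp: lt_sw)
  moreover have "lt (sw c) (sw (sw b)) \<or> lt (sw (sw b)) (sw c)"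
    using assms(6) by (metis lt_sw sw_sw)
  ultimately show False using nomix[OF sp_sw[OF sym assms(1)] sp_sw[OF sym assms(2)] sp_sw[OF sym assms(3)]]
    by blast
qed

lemma mid: "lt p q \<Longrightarrow> lt q r \<Longrightarrow> adj q c \<Longrightarrow> adj p c \<or> adj r c"
  unfolding adj_def using lt_trans by blast

lemma key_oriented:
  assumes sym: "\<forall>x y. E x y \<longrightarrow> E y x"
    and "sp E P1 a" "sp E P2 b" "sp E P3 c"
    and ab: "lt a b \<or> lt b a" and ac: "lt a c \<or> lt c a" and bc: "adj b c"
    and "adj a ca" "\<not> adj b ca" "\<not> adj c ca"
    and "adj b cb" "\<not> adj a cb" "\<not> adj c cb"
    and "adj c cc" "\<not> adj a cc" "\<not> adj b cc"
  shows False
proof -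
  have bc': "lt b c \<or> lt c b \<or> lt b (sw c) \<or> lt (sw c) b" using bc unfolding adj_def .
  show False
    using ab ac
  proof (elim disjE)
    assume "lt a b" "lt a c"
    then have "lt b c \<or> lt c b" using bc' nomix[OF assms(2,4,3)] by blast
    then show False using mid assms by blast
  next
    assume "lt a b" "lt c a"
    then show False using mid assms by blast
  next
    assume "lt b a" "lt a c"
    then show False using mid assms by blast
  next
    assume "lt b a" "lt c a"
    then have "lt b c \<or> lt c b" using bc' nomix2[OF assms(2,4,3) _ _ _ sym] by blast
    then show False using mid assms by blast
  qed
qed

lemma orient:
  assumes sym: "\<forall>x y. E x y \<longrightarrow> E y x" and "sp E Q b" "adj a b"
  obtains b' where "sp E Q b'" "lt a b' \<or> lt b' a" "\<And>c. adj b' c = adj b c"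
proof -
  have "lt a b \<or> lt b a \<or> lt a (sw b) \<or> lt (sw b) a" using assms(3) unfolding adj_def .
  then show ?thesis
    using that[of b] that[of "sw b"] assms(2) sp_sw[OF sym assms(2)] adj_sw1 by blast
qed

lemma adj_sym: "adj q p = adj p q" unfolding adj_def by (metis lt_sw lt_swa lt_swb sw_sw)

lemma key:
  assumes sym: "\<forall>x y. E x y \<longrightarrow> E y x"
    and "sp E P1 a" "sp E P2 b" "sp E P3 c"
    and ab: "adj a b" and ac: "adj a c" and bc: "adj b c"
    and "adj a ca" "\<not> adj b ca" "\<not> adj c ca"
    and "adj b cb" "\<not> adj a cb" "\<not> adj c cb"
    and "adj c cc" "\<not> adj a cc" "\<not> adj b cc"
  shows False
proof -
  obtain b' where b': "sp E P2 b'" "lt a b' \<or> lt b' a" "\<And>x. adj b' x = adj b x"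
    using orient[OF sym assms(3) ab] by blast
  obtain c' where c': "sp E P3 c'" "lt a c' \<or> lt c' a" "\<And>x. adj c' x = adj c x"
    using orient[OF sym assms(4) ac] by blast
  have "adj b' c'" using b'(3) c'(3) bc adj_sym by metis
  then show False using key_oriented[OF sym assms(2) b'(1) c'(1) b'(2) c'(2)] assms b'(3) c'(3)
    by blast
qed

lemma nS_lemma:
  assumes "S \<subseteq> {{3,4}, {3,5}, {4,5}}" "{x,y} \<in> S"
  shows "x \<ge> (3::nat)"
proof -
  have "{x,y} \<in> {{3,4}, {3,5}, {4,5}}" using assms by blast
  then have "{x,y} = {3,4} \<or> {x,y} = {3,5} \<or> {x,y} = {4,5}" by simp
  moreover have "x \<in> {x,y}" by simp
  ultimately have "x \<in> {3,4} \<or> x \<in> {3,5} \<or> x \<in> {4,5}" by metis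
  then show ?thesis by auto
qed

lemma neg_lemma:
  assumes "S \<subseteq> {{3,4}, {3,5}, {4,5}}" "a < 3" "\<not> net_E a b"
  shows "\<not> net_star_E S a b"
  using assms nS_lemma[OF assms(1), of a b] unfolding net_star_E_def by auto

theorem corollary3:
  fixes V :: "'a set" and E :: "'a \<Rightarrow> 'a \<Rightarrow> bool"
  assumes "simple_graph V E"
  shows "\<not> (\<exists>S. net_star_extra S \<and> has_induced_copy (KBm_V V E) (KBm_E V E) net_V (net_star_E S))"
proof
  assume "\<exists>S. net_star_extra S \<and> has_induced_copy (KBm_V V E) (KBm_E V E) net_V (net_star_E S)"
  then obtain S where S0: "net_star_extra S" and
    hic: "has_induced_copy (KBm_V V E) (KBm_E V E) net_V (net_star_E S)" by blast
  have S: "S \<subseteq> {{3,4}, {3,5}, {4,5}}" using S0 unfolding net_star_extra_def .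
  from hic obtain f where inj: "inj_on f {0..<6}"
    and sub: "f ` {0..<6} \<subseteq> KBm_V V E"
    and ed: "\<forall>a\<in>{0..<6}. \<forall>b\<in>{0..<6}. KBm_E V E (f a) (f b) \<longleftrightarrow> net_star_E S a b"
    unfolding has_induced_copy_def net_V_def by blast
  have sym: "\<forall>x y. E x y \<longrightarrow> E y x" using assms unfolding simple_graph_def by blast
  have bic: "\<And>i. i < 6 \<Longrightarrow> biclique V E (f i)"
    using sub by (simp add: KBm_V_def image_subset_iff)
  have "\<And>i. i < 6 \<Longrightarrow> \<exists>p. sp E (f i) p"
  proof -
    fix i :: nat assume "i < 6"
    then obtain X Y where "sides E (f i) X Y"
      using bic unfolding biclique_def complete_bipartite_set_def by blast
    then have "sp E (f i) (X,Y)" by (simp add: sp_def)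
    then show "\<exists>p. sp E (f i) p" by blast
  qed
  then obtain sd where sd: "\<And>i. i < 6 \<Longrightarrow> sp E (f i) (sd i)" by metis
  have A: "\<And>i j. i < 6 \<Longrightarrow> j < 6 \<Longrightarrow> i \<noteq> j \<Longrightarrow> adj (sd i) (sd j) \<longleftrightarrow> net_star_E S i j"
  proof -
    fix i j :: nat assume ij: "i < 6" "j < 6" "i \<noteq> j"
    then have ne: "f i \<noteq> f j" using inj unfolding inj_on_def by auto
    have e1: "KBm_E V E (f i) (f j) \<longleftrightarrow> net_star_E S i j" using ed ij by simp
    have e2: "KBm_E V E (f i) (f j) \<longleftrightarrow> f i \<noteq> f j \<and> adj (sd i) (sd j)"
      using KBm_E_adj[OF sym bic[OF ij(1)] bic[OF ij(2)] sd[OF ij(1)] sd[OF ij(2)]] .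
    show "adj (sd i) (sd j) \<longleftrightarrow> net_star_E S i j" using e1 e2 ne by simp
  qed
  have pos: "net_star_E S 0 1" "net_star_E S 0 2" "net_star_E S 1 2"
    "net_star_E S 0 3" "net_star_E S 1 4" "net_star_E S 2 5"
    unfolding net_star_E_def net_E_def by auto
  have nE: "\<not> net_E 1 3" "\<not> net_E 2 3" "\<not> net_E 0 4"
    "\<not> net_E 2 4" "\<not> net_E 0 5" "\<not> net_E 1 5"
    unfolding net_E_def by (auto simp: doubleton_eq_iff)
  have neg: "\<not> net_star_E S 1 3" "\<not> net_star_E S 2 3" "\<not> net_star_E S 0 4"
    "\<not> net_star_E S 2 4" "\<not> net_star_E S 0 5" "\<not> net_star_E S 1 5"
    using neg_lemma[OF S] nE by auto
  have p: "adj (sd 0) (sd 1)" "adj (sd 0) (sd 2)" "adj (sd 1) (sd 2)"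
    "adj (sd 0) (sd 3)" "adj (sd 1) (sd 4)" "adj (sd 2) (sd 5)"
    using A pos by auto
  have n: "\<not> adj (sd 1) (sd 3)" "\<not> adj (sd 2) (sd 3)" "\<not> adj (sd 0) (sd 4)"
    "\<not> adj (sd 2) (sd 4)" "\<not> adj (sd 0) (sd 5)" "\<not> adj (sd 1) (sd 5)"
    using A neg by auto
  show False
    using key[OF sym sd[of 0] sd[of 1] sd[of 2] p(1,2,3,4) n(1,2) p(5) n(3,4) p(6) n(5,6)]
    by simp
qed

end
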